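(* For every $\varepsilon>0$ there exists $M>0$ such that every instance with $\sum_{j=1}^n h(j)\ge M$ (recall $h(1)=1$) satisfies $H^{PW''}\le \left(\tfrac{12}{7}+\varepsilon\right)H^*$. That is, when $\sum_j h(j)\gg h(1)$, the approximation ratio $H^{PW''}/H^*$ is asymptotically at most $\tfrac{12}{7}$.
   Context: An instance consists of an integer $n\ge 1$ and growth rates $1=h(1)\ge h(2)\ge\cdots\ge h(n)>0$ of bamboos $b_1,\dots,b_n$. Bamboo Garden Trimming (discrete version): - All heights are $0$ initially. - On each day $t=1,2,\dots$ every bamboo $b_j$ grows by $h(j)$. - At the end of each day the gardener cuts exactly one bamboo $\sigma(t)\in\{1,\dots,n\}$ back to height $0$. The height of a schedule $\sigma:\mathbb{N}\to\{1,\dots,n\}$ is the supremum, over all days $t$ and all $j$, of the height of $b_j$ at the end of day $t$ just before the cut. $H^*$ denotes the infimum of this height over all schedules. Value of algorithm PW'': - Split $\{1,\dots,n\}$ into four sets: - $S_1=\{j: \tfrac23<h(j)\le 1\}$; - $S_2=\{j:\tfrac12<h(j)\le\tfrac23\}$; - $S_3=\{j: h(j)\le\tfrac12 \text{ and } \tfrac23 2^{-k}<h(j)\le 2^{-k}\text{ for some integer }k\ge1\}$; - $S_4=\{j: h(j)\le\tfrac12\text{ and } 2^{-(k+1)}<h(j)\le \tfrac23 2^{-k}\text{ for some integer }k\ge 1\}$. - Modified growths: $h''(j)=2^{-k}$ for $j\in S_3$ and $h''(j)=\tfrac23 2^{-k}$ for $j\in S_4$, with $k$ as in the definition of the set. -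 Let $\pi_1=|S_1|$, $sh_3=\sum_{j\in S_3}h''(j)$, $sh_4=\sum_{j\in S_4}h''(j)$, $\pi_3=\lfloor sh_3\rfloor$, $\pi_4=\lfloor sh_4\rfloor$, $f_3=sh_3-\pi_3$, $f_4=sh_4-\pi_4$. - Option (a): $\pi_R(a)=\lceil f_3+f_4\rceil$ and $z(a)=\pi_1+|S_2|+\pi_3+\pi_4+\pi_R(a)$. - Option (b): if $S_2=\emptyset$ put $z(b)=+\infty$. Otherwise let $h^*=\max_{j\in S_2}h(j)$ and $f_2=\tfrac12$ if $|S_2|$ is odd, $f_2=0$ if $|S_2|$ is even. Then $\pi_R(b)=\lceil f_2+f_3+f_4\rceil$ and $z(b)=2h^*\,(\pi_1+\lfloor |S_2|/2\rfloor+\pi_3+\pi_4+\pi_R(b))$. - The value returned by algorithm PW'' is $H^{PW''}=\min\{z(a),z(b)\}$. The paper takes this as the maximum height of the periodic pinwheel trimming schedule that it builds from these partitions. *)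

theory Defs
  imports "HOL-Library.Extended_Real" Complex_Main
begin

definition bgt_instance :: "nat \<Rightarrow> (nat \<Rightarrow> real) \<Rightarrow> bool" where
  "bgt_instance n h \<longleftrightarrow> n \<ge> 1 \<and> h 1 = 1 \<and>
     (\<forall>i j. 1 \<le> i \<longrightarrow> i \<le> j \<longrightarrow> j \<le> n \<longrightarrow> h j \<le> h i) \<and> h n > 0"

(* A schedule cuts bamboo sigma t in {1..n} at the end of each day t >= 1 (sigma 0 is unused). *)
definition schedule :: "nat \<Rightarrow> (nat \<Rightarrow> nat) \<Rightarrow> bool" where
  "schedule n \<sigma> \<longleftrightarrow> (\<forall>t\<ge>1. \<sigma> t \<in> {1..n})"

(* height of bamboo j at the end of day t, after the cut of that day (day 0: initial height 0) *)
fun after_cut :: "(nat \<Rightarrow> nat) \<Rightarrow> (nat \<Rightarrow> real) \<Rightarrow> nat \<Rightarrow> nat \<Rightarrow> real" where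
  "after_cut \<sigma> h j 0 = 0"
| "after_cut \<sigma> h j (Suc t) = (if \<sigma> (Suc t) = j then 0 else after_cut \<sigma> h j t + h j)"

(* height of bamboo j at the end of day Suc t, just before the cut *)
definition before_cut :: "(nat \<Rightarrow> nat) \<Rightarrow> (nat \<Rightarrow> real) \<Rightarrow> nat \<Rightarrow> nat \<Rightarrow> real" where
  "before_cut \<sigma> h j t = after_cut \<sigma> h j t + h j"

definition sched_height :: "nat \<Rightarrow> (nat \<Rightarrow> real) \<Rightarrow> (nat \<Rightarrow> nat) \<Rightarrow> ereal" where
  "sched_height n h \<sigma> = (SUP p \<in> UNIV \<times> {1..n}. ereal (before_cut \<sigma> h (snd p) (fst p)))"

definition H_opt :: "nat \<Rightarrow> (nat \<Rightarrow> real) \<Rightarrow> ereal" where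
  "H_opt n h = (INF \<sigma> \<in> {\<sigma>. schedule n \<sigma>}. sched_height n h \<sigma>)"

(* for 0 < x <= 1/2: the unique k (necessarily >= 1) with 2^-(k+1) < x <= 2^-k *)
definition kidx :: "real \<Rightarrow> nat" where
  "kidx x = (THE k::nat. (1/2)^(k+1) < x \<and> x \<le> (1/2)^k)"

definition S1 :: "nat \<Rightarrow> (nat \<Rightarrow> real) \<Rightarrow> nat set" where
  "S1 n h = {j \<in> {1..n}. 2/3 < h j \<and> h j \<le> 1}"
definition S2 :: "nat \<Rightarrow> (nat \<Rightarrow> real) \<Rightarrow> nat set" where
  "S2 n h = {j \<in> {1..n}. 1/2 < h j \<and> h j \<le> 2/3}"
definition S3 :: "nat \<Rightarrow> (nat \<Rightarrow> real) \<Rightarrow> nat set" where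
  "S3 n h = {j \<in> {1..n}. h j \<le> 1/2 \<and>
     (\<exists>k::nat. k \<ge> 1 \<and> 2/3 * (1/2)^k < h j \<and> h j \<le> (1/2)^k)}"
definition S4 :: "nat \<Rightarrow> (nat \<Rightarrow> real) \<Rightarrow> nat set" where
  "S4 n h = {j \<in> {1..n}. h j \<le> 1/2 \<and>
     (\<exists>k::nat. k \<ge> 1 \<and> (1/2)^(k+1) < h j \<and> h j \<le> 2/3 * (1/2)^k)}"

definition h2 :: "(nat \<Rightarrow> real) \<Rightarrow> nat \<Rightarrow> real" where
  "h2 h j = (if 2/3 * (1/2)^(kidx (h j)) < h j then (1/2)^(kidx (h j))
             else 2/3 * (1/2)^(kidx (h j)))"

definition pw_za :: "nat \<Rightarrow> (nat \<Rightarrow> real) \<Rightarrow> real" where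
  "pw_za n h = (let sh3 = (\<Sum>j\<in>S3 n h. h2 h j); sh4 = (\<Sum>j\<in>S4 n h. h2 h j);
                    f3 = sh3 - of_int \<lfloor>sh3\<rfloor>; f4 = sh4 - of_int \<lfloor>sh4\<rfloor>
                in real (card (S1 n h)) + real (card (S2 n h)) + of_int \<lfloor>sh3\<rfloor> + of_int \<lfloor>sh4\<rfloor>
                   + of_int \<lceil>f3 + f4\<rceil>)"

definition pw_zb :: "nat \<Rightarrow> (nat \<Rightarrow> real) \<Rightarrow> ereal" where
  "pw_zb n h = (if S2 n h = {} then \<infinity> else
     (let sh3 = (\<Sum>j\<in>S3 n h. h2 h j); sh4 = (\<Sum>j\<in>S4 n h. h2 h j);
          f3 = sh3 - of_int \<lfloor>sh3\<rfloor>; f4 = sh4 - of_int \<lfloor>sh4\<rfloor>;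
          hs = Max (h ` S2 n h);
          f2 = (if odd (card (S2 n h)) then 1/2 else 0::real)
      in ereal (2 * hs * (real (card (S1 n h)) + real (card (S2 n h) div 2)
                 + of_int \<lfloor>sh3\<rfloor> + of_int \<lfloor>sh4\<rfloor> + of_int \<lceil>f2 + f3 + f4\<rceil>))))"

definition H_PW :: "nat \<Rightarrow> (nat \<Rightarrow> real) \<Rightarrow> ereal" where
  "H_PW n h = min (ereal (pw_za n h)) (pw_zb n h)"

end

theory Submission
  imports Defs
begin

lemma kidx_prop:
  assumes "0 < x" "x \<le> 1/2"
  shows "(1/2::real)^(kidx x + 1) < x"
proof -
  obtain N where N: "(1/2::real)^N < x" using real_arch_pow_inv[of x "1/2"] assms by auto
  have ex: "(1/2::real)^(N+1) < x"
  proof -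
    have "(1/2::real)^(N+1) \<le> (1/2)^N" by (rule power_decreasing) auto
    then show ?thesis using N by linarith
  qed
  define k where "k = (LEAST k. (1/2::real)^(k+1) < x)"
  have k1: "(1/2::real)^(k+1) < x" unfolding k_def by (rule LeastI[where P="\<lambda>k. (1/2::real)^(k+1) < x", OF ex])
  have k2: "x \<le> (1/2)^k"
  proof (cases k)
    case 0 then show ?thesis using assms by simp
  next
    case (Suc m)
    have "m < k" using Suc by simp
    then have "\<not> (1/2::real)^(m+1) < x" unfolding k_def by (rule not_less_Least)
    then show ?thesis using Suc by simp
  qed
  have uniq: "k' = k" if "(1/2::real)^(k'+1) < x \<and> x \<le> (1/2)^k'" for k'
  proof (rule ccontr)
    assume "k' \<noteq> k"
    then consider "k' < k" | "k < k'" by linarith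
    then show False
    proof cases
      case 1
      then have "(1/2::real)^k \<le> (1/2)^(k'+1)" by (intro power_decreasing) auto
      then show False using that k2 by linarith
    next
      case 2
      then have "(1/2::real)^k' \<le> (1/2)^(k+1)" by (intro power_decreasing) auto
      then show False using that k1 by linarith
    qed
  qed
  have "kidx x = k" unfolding kidx_def
    proof (rule the_equality)
    show "(1/2::real)^(k+1) < x \<and> x \<le> (1/2)^k" using k1 k2 by simp
  next
    fix k' assume "(1/2::real)^(k'+1) < x \<and> x \<le> (1/2)^k'"
    then show "k' = k" by (rule uniq)
  qed
  then show ?thesis using k1 by simp
qed

lemma h2_bound:
  assumes "0 < h j" "h j \<le> 1/2"
  shows "h2 h j \<le> 3/2 * h j"
proof -
  let ?k = "kidx (h j)"
  have p: "(1/2::real)^(?k+1) < h j" using kidx_prop assms by blast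
  show ?thesis
    unfolding h2_def using p by (auto simp: field_simps)
qed

lemma count_bound:
  fixes H :: real
  assumes bnd: "\<And>t. before_cut \<sigma> h j t \<le> H"
  shows "h j * real T \<le> H * (\<Sum>t\<in>{1..T}. if \<sigma> t = j then 1 else 0) + after_cut \<sigma> h j T"
proof (induction T)
  case 0 then show ?case by simp
next
  case (Suc T)
  have b: "after_cut \<sigma> h j T + h j \<le> H" using bnd[of T] by (simp add: before_cut_def)
  show ?case
  proof (cases "\<sigma> (Suc T) = j")
    case True
    then show ?thesis using Suc b by (simp add: algebra_simps)
  next
    case False
    then show ?thesis using Suc by (simp add: algebra_simps)
  qed
qed

lemma lower_real:
  fixes H :: real
  assumes inst: "bgt_instance n h"
    and bnd: "\<And>t j. j \<in> {1..n} \<Longrightarrow> before_cut \<sigma> h j t \<le> H"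
  shows "(\<Sum>j=1..n. h j) \<le> H"
proof (rule ccontr)
  let ?S = "\<Sum>j=1..n. h j"
  assume "\<not> ?S \<le> H"
  hence SH: "H < ?S" by simp
  have pos: "\<And>j. j \<in> {1..n} \<Longrightarrow> 0 < h j"
  proof -
    fix j assume j: "j \<in> {1..n}"
    have "h n \<le> h j" using inst j unfolding bgt_instance_def by auto
    then show "0 < h j" using inst unfolding bgt_instance_def by auto
  qed
  have n1: "1 \<le> n" using inst unfolding bgt_instance_def by auto
  have H0: "0 < H"
  proof -
    have "before_cut \<sigma> h 1 0 \<le> H" using bnd[of 1 0] n1 by auto
    then show ?thesis using pos[of 1] n1 by (simp add: before_cut_def)
  qed
  define c where "c j T = (\<Sum>t\<in>{1..T}. if \<sigma> t = j then 1 else (0::real))" for j T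
  have each: "h j * real T \<le> H * (c j T + 1)" if j: "j \<in> {1..n}" for j T
  proof -
    have "h j * real T \<le> H * c j T + after_cut \<sigma> h j T"
      unfolding c_def by (rule count_bound) (use bnd j in auto)
    moreover have "after_cut \<sigma> h j T \<le> H"
      using bnd[OF j, of T] pos[OF j] by (simp add: before_cut_def)
    ultimately show ?thesis by (simp add: algebra_simps)
  qed
  have csum: "(\<Sum>j=1..n. c j T) \<le> real T" for T
  proof -
    have "(\<Sum>j=1..n. c j T) = (\<Sum>t\<in>{1..T}. \<Sum>j=1..n. if \<sigma> t = j then 1 else (0::real))"
      unfolding c_def by (rule sum.swap)
    also have "\<dots> = (\<Sum>t\<in>{1..T}. if \<sigma> t \<in> {1..n} then 1 else (0::real))"
      by (rule sum.cong) (auto simp: sum.delta eq_commute[of "\<sigma> _"])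
    also have "\<dots> \<le> (\<Sum>t\<in>{1..T}. (1::real))" by (rule sum_mono) auto
    finally show ?thesis by simp
  qed
  have tot: "?S * real T \<le> H * (real T + real n)" for T
  proof -
    have "?S * real T = (\<Sum>j=1..n. h j * real T)" by (simp add: sum_distrib_right)
    also have "\<dots> \<le> (\<Sum>j=1..n. H * (c j T + 1))" by (rule sum_mono) (use each in auto)
    also have "\<dots> = H * (\<Sum>j=1..n. c j T + 1)" by (rule sum_distrib_left[symmetric])
    also have "H * (\<Sum>j=1..n. c j T + 1) = H * ((\<Sum>j=1..n. c j T) + real n)"
      by (simp add: sum.distrib)
    also have "\<dots> \<le> H * (real T + real n)" using csum[of T] H0 by (intro mult_left_mono) auto
    finally show ?thesis .
  qed
  obtain T :: nat where T: "H * real n / (?S - H) < real T" using reals_Archimedean2 by blast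
  have "H * real n < (?S - H) * real T" using T SH by (simp add: field_simps)
  with tot[of T] show False by (simp add: algebra_simps)
qed

lemma lower:
  assumes inst: "bgt_instance n h"
  shows "ereal (\<Sum>j=1..n. h j) \<le> H_opt n h"
  unfolding H_opt_def
proof (rule INF_greatest)
  fix \<sigma> assume "\<sigma> \<in> {\<sigma>. schedule n \<sigma>}"
  let ?SH = "sched_height n h \<sigma>"
  have n1: "1 \<le> n" using inst unfolding bgt_instance_def by auto
  have up: "ereal (before_cut \<sigma> h j t) \<le> ?SH" if "j \<in> {1..n}" for j t
    unfolding sched_height_def
    by (rule SUP_upper2[of "(t, j)"]) (use that in auto)
  show "ereal (\<Sum>j=1..n. h j) \<le> ?SH"
  proof (rule ccontr)
    assume "\<not> ?thesis"
    hence lt: "?SH < ereal (\<Sum>j=1..n. h j)" by simp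
    have "?SH \<noteq> \<infinity>" using lt by auto
    moreover have "?SH \<noteq> -\<infinity>" using up[of 1 0] n1 by auto
    ultimately obtain H where H: "?SH = ereal H" by (cases ?SH) auto
    have "(\<Sum>j=1..n. h j) \<le> H"
      by (rule lower_real[OF inst]) (use up H in auto)
    then show False using lt H by simp
  qed
qed

lemma S34_disj: "S3 n h \<inter> S4 n h = {}"
proof (rule ccontr)
  assume "S3 n h \<inter> S4 n h \<noteq> {}"
  then obtain j k1 k2 where a: "2/3 * (1/2::real)^k1 < h j" "h j \<le> (1/2)^k1"
     and b: "(1/2::real)^(k2+1) < h j" "h j \<le> 2/3 * (1/2)^k2"
    unfolding S3_def S4_def by blast
  consider "k1 = k2" | "k1 < k2" | "k2 < k1" by linarith
  then show False
  proof cases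
    case 1 then show False using a b by simp
  next
    case 2
    then have "(1/2::real)^k2 \<le> (1/2)^k1" by (intro power_decreasing) auto
    then show False using a b by linarith
  next
    case 3
    then have "(1/2::real)^k1 \<le> (1/2)^(k2+1)" by (intro power_decreasing) auto
    then show False using a b by linarith
  qed
qed

lemma upper:
  assumes inst: "bgt_instance n h"
  shows "H_PW n h \<le> ereal (12/7 * (\<Sum>j=1..n. h j) + 8/7)"
proof -
  let ?S = "\<Sum>j=1..n. h j"
  have pos: "\<And>j. j \<in> {1..n} \<Longrightarrow> 0 < h j"
  proof -
    fix j assume j: "j \<in> {1..n}"
    have "h n \<le> h j" using inst j unfolding bgt_instance_def by auto
    then show "0 < h j" using inst unfolding bgt_instance_def by auto
  qed
  have sub1: "S1 n h \<subseteq> {1..n}" and sub2: "S2 n h \<subseteq> {1..n}"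
    and sub3: "S3 n h \<subseteq> {1..n}" and sub4: "S4 n h \<subseteq> {1..n}"
    unfolding S1_def S2_def S3_def S4_def by auto
  have fin1: "finite (S1 n h)" and fin2: "finite (S2 n h)" and fin3: "finite (S3 n h)"
    and fin4: "finite (S4 n h)"
    using sub1 sub2 sub3 sub4 finite_subset by blast+
  define a where "a = (\<Sum>j\<in>S1 n h. h j)"
  define b where "b = (\<Sum>j\<in>S2 n h. h j)"
  define c3 where "c3 = (\<Sum>j\<in>S3 n h. h j)"
  define c4 where "c4 = (\<Sum>j\<in>S4 n h. h j)"
  define A where "A = real (card (S1 n h))"
  define B where "B = card (S2 n h)"
  define sh3 where "sh3 = (\<Sum>j\<in>S3 n h. h2 h j)"
  define sh4 where "sh4 = (\<Sum>j\<in>S4 n h. h2 h j)"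
  have A_le: "A \<le> 3/2 * a"
  proof -
    have "A = (\<Sum>j\<in>S1 n h. (1::real))" unfolding A_def by simp
    also have "\<dots> \<le> (\<Sum>j\<in>S1 n h. 3/2 * h j)" by (rule sum_mono) (auto simp: S1_def)
    finally show ?thesis unfolding a_def by (simp add: sum_distrib_left)
  qed
  have B_le: "real B \<le> 2 * b"
  proof -
    have "real B = (\<Sum>j\<in>S2 n h. (1::real))" unfolding B_def by simp
    also have "\<dots> \<le> (\<Sum>j\<in>S2 n h. 2 * h j)" by (rule sum_mono) (auto simp: S2_def)
    finally show ?thesis unfolding b_def by (simp add: sum_distrib_left)
  qed
  have sh3_le: "sh3 \<le> 3/2 * c3"
  proof -
    have "sh3 \<le> (\<Sum>j\<in>S3 n h. 3/2 * h j)" unfolding sh3_def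
      by (rule sum_mono, rule h2_bound) (use pos sub3 in \<open>auto simp: S3_def\<close>)
    then show ?thesis unfolding c3_def by (simp add: sum_distrib_left)
  qed
  have sh4_le: "sh4 \<le> 3/2 * c4"
  proof -
    have "sh4 \<le> (\<Sum>j\<in>S4 n h. 3/2 * h j)" unfolding sh4_def
      by (rule sum_mono, rule h2_bound) (use pos sub4 in \<open>auto simp: S4_def\<close>)
    then show ?thesis unfolding c4_def by (simp add: sum_distrib_left)
  qed
  have h2nn: "0 \<le> h2 h j" for j unfolding h2_def by auto
  have sh3_nn: "0 \<le> sh3" unfolding sh3_def by (rule sum_nonneg) (use h2nn in auto)
  have sh4_nn: "0 \<le> sh4" unfolding sh4_def by (rule sum_nonneg) (use h2nn in auto)
  have b_nn: "0 \<le> b" unfolding b_def by (rule sum_nonneg) (use pos sub2 in force)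
  have a_nn: "0 \<le> a" unfolding a_def by (rule sum_nonneg) (use pos sub1 in force)
  have c3_nn: "0 \<le> c3" unfolding c3_def by (rule sum_nonneg) (use pos sub3 in force)
  have c4_nn: "0 \<le> c4" unfolding c4_def by (rule sum_nonneg) (use pos sub4 in force)
  have total: "a + b + c3 + c4 \<le> ?S"
  proof -
    have d12: "S1 n h \<inter> S2 n h = {}" by (auto simp: S1_def S2_def)
    have d3: "(S1 n h \<union> S2 n h) \<inter> S3 n h = {}" by (auto simp: S1_def S2_def S3_def)
    have d4: "(S1 n h \<union> S2 n h \<union> S3 n h) \<inter> S4 n h = {}"
      using S34_disj[of n h] by (auto simp: S1_def S2_def S4_def)
    have "a + b + c3 + c4 = (\<Sum>j\<in>S1 n h \<union> S2 n h \<union> S3 n h \<union> S4 n h. h j)"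
      unfolding a_def b_def c3_def c4_def
      using fin1 fin2 fin3 fin4 d12 d3 d4
      by (simp add: sum.union_disjoint)
    also have "\<dots> \<le> ?S"
      by (rule sum_mono2) (use sub1 sub2 sub3 sub4 pos in \<open>auto intro: less_imp_le\<close>)
    finally show ?thesis .
  qed
  have za: "pw_za n h \<le> A + real B + sh3 + sh4 + 1"
  proof -
    have "of_int \<lceil>(sh3 - of_int \<lfloor>sh3\<rfloor>) + (sh4 - of_int \<lfloor>sh4\<rfloor>)\<rceil>
          \<le> (sh3 - of_int \<lfloor>sh3\<rfloor>) + (sh4 - of_int \<lfloor>sh4\<rfloor>) + (1::real)"
      by (rule of_int_ceiling_le_add_one)
    then show ?thesis
      unfolding pw_za_def Let_def A_def B_def sh3_def sh4_def by linarith
  qed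
  show ?thesis
  proof (cases "S2 n h = {}")
    case True
    then have "B = 0" unfolding B_def by simp
    moreover have "b = 0" unfolding b_def using True by simp
    ultimately have "pw_za n h \<le> 12/7 * ?S + 8/7"
      using za A_le sh3_le sh4_le total a_nn c3_nn c4_nn by linarith
    then show ?thesis unfolding H_PW_def by (simp add: min_le_iff_disj)
  next
    case False
    define hs where "hs = Max (h ` S2 n h)"
    have hb: "\<And>y. y \<in> h ` S2 n h \<Longrightarrow> y \<le> 2/3" unfolding S2_def by auto
    have hs_le: "hs \<le> 2/3" unfolding hs_def
    proof (rule Max.boundedI)
      show "finite (h ` S2 n h)" using fin2 by (rule finite_imageI)
      show "h ` S2 n h \<noteq> {}" using False by simp
    qed (rule hb)
    have hs_pos: "0 < hs"
    proof -
      obtain j where j: "j \<in> S2 n h" using False by blast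
      have "h j \<le> hs" unfolding hs_def using fin2 j by auto
      moreover have "0 < h j" using j by (auto simp: S2_def)
      ultimately show ?thesis by linarith
    qed
    define f2 where "f2 = (if odd B then 1/2 else (0::real))"
    define X where "X = A + real (B div 2) + of_int \<lfloor>sh3\<rfloor> + of_int \<lfloor>sh4\<rfloor>
         + of_int \<lceil>f2 + (sh3 - of_int \<lfloor>sh3\<rfloor>) + (sh4 - of_int \<lfloor>sh4\<rfloor>)\<rceil>"
    define Y where "Y = A + real B / 2 + sh3 + sh4 + 1"
    have zb: "pw_zb n h = ereal (2 * hs * X)"
      using False unfolding pw_zb_def Let_def X_def hs_def f2_def A_def B_def sh3_def sh4_def
      by simp
    have Bh: "real (B div 2) + f2 = real B / 2"
    proof -
      have "real B = 2 * real (B div 2) + (if odd B then 1 else 0)"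
      proof (cases "odd B")
        case True
        then obtain m where m: "B = 2 * m + 1" by (rule oddE)
        then show ?thesis using True by simp
      next
        case False
        then obtain m where m: "B = 2 * m" by (auto elim: evenE)
        then show ?thesis using False by simp
      qed
      then show ?thesis unfolding f2_def by auto
    qed
    have XY: "X \<le> Y"
    proof -
      have "of_int \<lceil>f2 + (sh3 - of_int \<lfloor>sh3\<rfloor>) + (sh4 - of_int \<lfloor>sh4\<rfloor>)\<rceil>
          \<le> f2 + (sh3 - of_int \<lfloor>sh3\<rfloor>) + (sh4 - of_int \<lfloor>sh4\<rfloor>) + (1::real)"
        by (rule of_int_ceiling_le_add_one)
      then show ?thesis unfolding X_def Y_def using Bh by linarith
    qed
    have A_nn: "0 \<le> A" unfolding A_def by simp
    have Y_nn: "0 \<le> Y" unfolding Y_def using A_nn sh3_nn sh4_nn by simp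
    have "2 * hs * X \<le> 2 * hs * Y" using XY hs_pos by (intro mult_left_mono) auto
    also have "\<dots> \<le> 2 * (2/3) * Y" using hs_le Y_nn by (intro mult_right_mono) auto
    finally have zbY: "2 * hs * X \<le> 4/3 * Y" by simp
    have "min (pw_za n h) (2 * hs * X) \<le> 4/7 * pw_za n h + 3/7 * (2 * hs * X)" by linarith
    also have "\<dots> \<le> 12/7 * ?S + 8/7"
    proof -
      have gen: "\<And>z Z. z \<le> A + real B + sh3 + sh4 + 1 \<Longrightarrow> Z \<le> 4/3 * (A + real B / 2 + sh3 + sh4 + 1)
          \<Longrightarrow> 4/7 * z + 3/7 * Z \<le> 12/7 * ?S + 8/7"
        using A_le B_le sh3_le sh4_le total by (simp add: field_simps)
      show ?thesis by (rule gen[OF za zbY[unfolded Y_def]])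
    qed
    finally have fin: "min (pw_za n h) (2 * hs * X) \<le> 12/7 * ?S + 8/7" .
    have eq: "min (ereal (pw_za n h)) (ereal (2 * hs * X)) = ereal (min (pw_za n h) (2 * hs * X))"
      by (auto simp: min_def)
    show ?thesis unfolding H_PW_def zb eq using fin by (simp only: ereal_less_eq)
  qed
qed

theorem proposition1:
  shows "\<forall>\<epsilon>::real. \<epsilon> > 0 \<longrightarrow> (\<exists>M::real. M > 0 \<and>
           (\<forall>n h. bgt_instance n h \<and> (\<Sum>j=1..n. h j) \<ge> M \<longrightarrow>
              H_PW n h \<le> ereal (12/7 + \<epsilon>) * H_opt n h))"
proof (intro allI impI)
  fix \<epsilon> :: real assume e: "\<epsilon> > 0"
  show "\<exists>M::real. M > 0 \<and>
           (\<forall>n h. bgt_instance n h \<and> (\<Sum>j=1..n. h j) \<ge> M \<longrightarrow>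
              H_PW n h \<le> ereal (12/7 + \<epsilon>) * H_opt n h)"
  proof (intro exI conjI allI impI)
    show "0 < 8 / (7 * \<epsilon>)" using e by simp
    fix n h assume a: "bgt_instance n h \<and> 8 / (7 * \<epsilon>) \<le> (\<Sum>j=1..n. h j)"
    let ?S = "\<Sum>j=1..n. h j"
    have "8/7 \<le> \<epsilon> * ?S" using a e by (simp add: field_simps)
    then have r: "12/7 * ?S + 8/7 \<le> (12/7 + \<epsilon>) * ?S" by (simp add: algebra_simps)
    have "H_PW n h \<le> ereal (12/7 * ?S + 8/7)" using upper a by blast
    also have "\<dots> \<le> ereal ((12/7 + \<epsilon>) * ?S)" using r by simp
    also have "\<dots> = ereal (12/7 + \<epsilon>) * ereal ?S" by simp
    also have "\<dots> \<le> ereal (12/7 + \<epsilon>) * H_opt n h"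
      using lower[of n h] a e by (intro ereal_mult_left_mono) auto
    finally show "H_PW n h \<le> ereal (12/7 + \<epsilon>) * H_opt n h" .
  qed
qed

end
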